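(* Let $q\in\mathbb{C}\setminus\{0\}$, $n\in\mathbb{Z}_{>0}$, and let $\alpha,\beta,f\in\mathbb{C}[x^{-1}][[x]]$ with $\alpha,\beta$ nonzero. Suppose $\alpha\,\sigma_qf+f=\beta$ and that $\beta_j\neq0$ for every integer $0<j\le n$, where $\beta_j=\sum_{k=0}^{j-1}(-\alpha\sigma_q)^k\beta$. Then $$L_n^{\alpha,\beta}(f^n)=(-1)^{n(n-1)/2},$$ where $$L_n^{\alpha,\beta}=\frac{1}{\beta_n}\left(\alpha\sigma_q+1\right)\frac{1}{\beta_{n-1}}\left(\alpha^2\sigma_q-1\right)\cdots\frac{1}{\beta_1}\left(\alpha^n\sigma_q-(-1)^n\right),$$ i.e. the composition, from left to right over $i=1,\dots,n$, of the factors $\frac{1}{\beta_{n+1-i}}\left(\alpha^{i}\sigma_q-(-1)^{i}\right)$.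
   Context: $\mathbb{C}[x^{-1}][[x]]$ is the field of formal Laurent series; $\sigma_qf(x)=f(qx)$; field elements act as multiplication operators and products of operators denote composition. *)

theory Defs
  imports "HOL-Computational_Algebra.Formal_Laurent_Series"
begin

text \<open>The q-dilation operator: (sigma_q f)(x) = f(q x), i.e. the k-th coefficient is multiplied by q^k.\<close>
definition sigma_q :: "complex \<Rightarrow> complex fls \<Rightarrow> complex fls" where
  "sigma_q q f = Abs_fls (\<lambda>k. q powi k * fls_nth f k)"

definition beta_seq :: "complex \<Rightarrow> complex fls \<Rightarrow> complex fls \<Rightarrow> nat \<Rightarrow> complex fls" where
  "beta_seq q \<alpha> \<beta> j = (\<Sum>k<j. ((\<lambda>h. - (\<alpha> * sigma_q q h)) ^^ k) \<beta>)"

definition L_factor :: "complex \<Rightarrow> complex fls \<Rightarrow> complex fls \<Rightarrow> nat \<Rightarrow> nat \<Rightarrow> complex fls \<Rightarrow> complex fls" where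
  "L_factor q \<alpha> \<beta> n i g =
     (\<alpha> ^ i * sigma_q q g - (-1) ^ i * g) / beta_seq q \<alpha> \<beta> (n + 1 - i)"

definition L_op :: "complex \<Rightarrow> complex fls \<Rightarrow> complex fls \<Rightarrow> nat \<Rightarrow> complex fls \<Rightarrow> complex fls" where
  "L_op q \<alpha> \<beta> n g = foldr (\<lambda>i h. L_factor q \<alpha> \<beta> n i h) [1..<n+1] g"

end

theory Submission
  imports Defs
begin

unbundle fps_syntax

fun hcs :: "(nat \<Rightarrow> 'a::comm_ring_1) \<Rightarrow> nat \<Rightarrow> nat \<Rightarrow> 'a" where
  "hcs v 0 j = 1"
| "hcs v (Suc m) 0 = v 0 ^ Suc m"
| "hcs v (Suc m) (Suc j) = hcs v (Suc m) j + v (Suc j) * hcs v m (Suc j)"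

lemma hcs_diff0:
  "hcs (\<lambda>k. v (Suc k)) (Suc m) 0 - hcs v (Suc m) 0 = (v 1 - v 0) * hcs v m 1"
proof (induction m)
  case 0 then show ?case by simp
next
  case (Suc m)
  have h: "hcs v (Suc m) 1 = v 0 ^ Suc m + v 1 * hcs v m 1" by simp
  have "v 1 ^ Suc (Suc m) - v 0 ^ Suc (Suc m) = v 1 * (v 1 ^ Suc m - v 0 ^ Suc m) + (v 1 - v 0) * v 0 ^ Suc m"
    by (simp add: algebra_simps)
  also have "\<dots> = (v 1 - v 0) * hcs v (Suc m) 1"
  proof -
    have e: "v 1 ^ Suc m - v 0 ^ Suc m = (v 1 - v 0) * hcs v m 1" using Suc.IH by simp
    show ?thesis unfolding e h by (simp add: algebra_simps)
  qed
  finally show ?case by simp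
qed

lemma hcs_diff:
  "hcs (\<lambda>k. v (Suc k)) (Suc m) j - hcs v (Suc m) j = (v (Suc j) - v 0) * hcs v m (Suc j)"
proof (induction j arbitrary: m)
  case 0 then show ?case using hcs_diff0 by simp
next
  case (Suc j)
  show ?case
  proof (induction m)
    case 0
    have "hcs (\<lambda>k. v (Suc k)) (Suc 0) j - hcs v (Suc 0) j = (v (Suc j) - v 0)"
      using Suc.IH[of 0] by simp
    then show ?case by (simp add: algebra_simps)
  next
    case (Suc m')
    have A: "hcs (\<lambda>k. v (Suc k)) (Suc m') (Suc j) = hcs v (Suc m') (Suc j) + (v (Suc (Suc j)) - v 0) * hcs v m' (Suc (Suc j))"
      using Suc.IH by (simp add: algebra_simps)
    have B: "hcs (\<lambda>k. v (Suc k)) (Suc (Suc m')) j - hcs v (Suc (Suc m')) j = (v (Suc j) - v 0) * hcs v (Suc m') (Suc j)"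
      using \<open>\<And>m. hcs (\<lambda>k. v (Suc k)) (Suc m) j - hcs v (Suc m) j = (v (Suc j) - v 0) * hcs v m (Suc j)\<close> .
    have "hcs (\<lambda>k. v (Suc k)) (Suc (Suc m')) (Suc j) - hcs v (Suc (Suc m')) (Suc j)
      = (hcs (\<lambda>k. v (Suc k)) (Suc (Suc m')) j - hcs v (Suc (Suc m')) j)
        + v (Suc (Suc j)) * hcs (\<lambda>k. v (Suc k)) (Suc m') (Suc j) - v (Suc j) * hcs v (Suc m') (Suc j)"
      by simp
    also have "\<dots> = (v (Suc (Suc j)) - v 0) * (hcs v (Suc m') (Suc j) + v (Suc (Suc j)) * hcs v m' (Suc (Suc j)))"
      unfolding B A by (simp add: algebra_simps)
    also have "\<dots> = (v (Suc (Suc j)) - v 0) * hcs v (Suc m') (Suc (Suc j))" by simp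
    finally show ?case .
  qed
qed

lemma sigma_nth: "sigma_q q f $$ k = q powi k * f $$ k"
proof -
  obtain N where "\<forall>n<N. f$$n = 0" by (elim fls_nth_vanishes_belowE)
  hence "\<forall>n<N. q powi n * f$$n = 0" by auto
  thus ?thesis unfolding sigma_q_def by (rule nth_Abs_fls_lower_bound)
qed

lemma sigma_add: "sigma_q q (a + b) = sigma_q q a + sigma_q q b"
  by (rule fls_eqI) (simp add: sigma_nth algebra_simps)

lemma sigma_diff: "sigma_q q (a - b) = sigma_q q a - sigma_q q b"
  by (rule fls_eqI) (simp add: sigma_nth algebra_simps)

lemma sigma_uminus: "sigma_q q (- a) = - sigma_q q a"
  by (rule fls_eqI) (simp add: sigma_nth algebra_simps)

lemma sigma_zero: "sigma_q q 0 = 0"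
  by (rule fls_eqI) (simp add: sigma_nth)

lemma sigma_one: "sigma_q q 1 = 1"
  by (rule fls_eqI) (simp add: sigma_nth)

lemma sigma_subdegree:
  assumes "q \<noteq> 0" shows "fls_subdegree (sigma_q q f) = fls_subdegree f"
proof (cases "f = 0")
  case True then show ?thesis by (simp add: sigma_zero)
next
  case False
  show ?thesis
    by (rule fls_subdegree_eqI) (use False assms in \<open>simp_all add: sigma_nth\<close>)
qed

lemma sigma_mult:
  assumes "q \<noteq> 0" shows "sigma_q q (a * b) = sigma_q q a * sigma_q q b"
proof (rule fls_eqI)
  fix n
  have "(sigma_q q a * sigma_q q b) $$ n
     = (\<Sum>i=fls_subdegree a..n - fls_subdegree b. q powi i * a $$ i * (q powi (n - i) * b $$ (n - i)))"
    using fls_times_nth(2)[of "sigma_q q a" "sigma_q q b" n] by (simp add: sigma_subdegree assms sigma_nth)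
  also have "\<dots> = (\<Sum>i=fls_subdegree a..n - fls_subdegree b. q powi n * (a $$ i * b $$ (n - i)))"
  proof (rule sum.cong)
    fix i
    have "q powi i * q powi (n - i) = q powi n"
      using assms by (simp add: power_int_add[symmetric])
    then show "q powi i * a $$ i * (q powi (n - i) * b $$ (n - i)) = q powi n * (a $$ i * b $$ (n - i))"
      by (metis mult.assoc mult.left_commute)
  qed simp
  also have "\<dots> = q powi n * (a * b) $$ n"
    by (simp only: fls_times_nth(2)[of a b n] sum_distrib_left)
  finally have X: "(sigma_q q a * sigma_q q b) $$ n = q powi n * (a * b) $$ n" .
  then show "sigma_q q (a * b) $$ n = (sigma_q q a * sigma_q q b) $$ n"
    by (simp only: sigma_nth[of q "a*b" n])
qed

lemma sigma_power:
  assumes "q \<noteq> 0" shows "sigma_q q (a ^ k) = sigma_q q a ^ k"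
  by (induction k) (simp_all add: sigma_one sigma_mult assms)

lemma sigma_sign:
  assumes "q \<noteq> 0" shows "sigma_q q ((-1) ^ k * a) = (-1) ^ k * sigma_q q a"
  using assms by (simp add: sigma_mult sigma_power sigma_uminus sigma_one)

lemma sum_parity: "(\<Sum>k<n. n - k + 1::nat) = n * (n - 1) div 2 + 2 * n"
proof -
  have "(\<Sum>k<n. n - k + 1) = (\<Sum>k<n. (n - Suc k) + 2)"
    by (rule sum.cong) auto
  also have "\<dots> = (\<Sum>k<n. k + 2)"
    using sum.nat_diff_reindex[of "\<lambda>k. k + 2" n] by simp
  also have "\<dots> = (\<Sum>k<n. k) + 2 * n" by (induction n) auto
  also have "(\<Sum>k<n. k) = n * (n - 1) div 2"
  proof -
    have "2 * (\<Sum>k<n. k) = n * (n - 1)"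
    proof (induction n)
      case (Suc n) then show ?case by (cases n) (auto simp: algebra_simps)
    qed simp
    then show ?thesis by simp
  qed
  finally show ?thesis .
qed

lemma ring_id1: "(a::'a::comm_ring_1) ^ Suc m * (x + y * z) = a ^ Suc m * x + (a * y) * (a ^ m * z)"
  by (simp add: algebra_simps)

lemma ring_id2: "(s::'a::comm_ring_1) * H1 + (- w) * (t * H2) = s * (H1 + w * H2)" if "s = - t"
  using that by (simp add: algebra_simps)

lemma hcs_sigma:
  assumes q: "q \<noteq> 0" and vS: "\<And>j. v (Suc j) = - (\<alpha> * sigma_q q (v j))"
  shows "\<alpha> ^ m * sigma_q q (hcs v m j) = (-1) ^ m * hcs (\<lambda>k. v (Suc k)) m j"
  using vS
proof (induction v m j rule: hcs.induct)
  case (1 v j) show ?case by (simp add: sigma_one)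
next
  case (2 v m)
  have e0: "\<alpha> * sigma_q q (v 0) = - v (Suc 0)" using 2[of 0] by (simp only: minus_minus)
  have "\<alpha> ^ Suc m * sigma_q q (hcs v (Suc m) 0) = \<alpha> ^ Suc m * sigma_q q (v 0 ^ Suc m)"
    by (simp only: hcs.simps)
  also have "\<dots> = (\<alpha> * sigma_q q (v 0)) ^ Suc m"
    by (simp only: sigma_power[OF q] power_mult_distrib)
  also have "\<dots> = (-1) ^ Suc m * v (Suc 0) ^ Suc m" unfolding e0 by (rule power_minus)
  also have "\<dots> = (-1) ^ Suc m * hcs (\<lambda>k. v (Suc k)) (Suc m) 0"
    by (simp only: hcs.simps)
  finally show ?case .
next
  case (3 v m j)
  have i1: "\<alpha> ^ Suc m * sigma_q q (hcs v (Suc m) j) = (-1) ^ Suc m * hcs (\<lambda>k. v (Suc k)) (Suc m) j"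
    using 3(1) 3(3) by blast
  have i2: "\<alpha> ^ m * sigma_q q (hcs v m (Suc j)) = (-1) ^ m * hcs (\<lambda>k. v (Suc k)) m (Suc j)"
    using 3(2) 3(3) by blast
  have i3: "\<alpha> * sigma_q q (v (Suc j)) = - v (Suc (Suc j))"
    using 3(3)[of "Suc j"] by (simp only: minus_minus)
  have "\<alpha> ^ Suc m * sigma_q q (hcs v (Suc m) (Suc j))
     = \<alpha> ^ Suc m * sigma_q q (hcs v (Suc m) j) + (\<alpha> * sigma_q q (v (Suc j))) * (\<alpha> ^ m * sigma_q q (hcs v m (Suc j)))"
    by (simp only: hcs.simps sigma_add sigma_mult[OF q] ring_id1)
  also have "\<dots> = (-1) ^ Suc m * hcs (\<lambda>k. v (Suc k)) (Suc m) j + (- v (Suc (Suc j))) * ((-1) ^ m * hcs (\<lambda>k. v (Suc k)) m (Suc j))"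
    unfolding i1 i2 i3 ..
  also have "\<dots> = (-1) ^ Suc m * hcs (\<lambda>k. v (Suc k)) (Suc m) (Suc j)"
    unfolding hcs.simps(3) by (rule ring_id2) simp
  finally show ?case .
qed

theorem theorem2:
  fixes q :: complex and n :: nat and \<alpha> \<beta> f :: "complex fls"
  assumes "q \<noteq> 0" and "n > 0"
    and "\<alpha> \<noteq> 0" and "\<beta> \<noteq> 0"
    and "\<alpha> * sigma_q q f + f = \<beta>"
    and "\<forall>j. 0 < j \<and> j \<le> n \<longrightarrow> beta_seq q \<alpha> \<beta> j \<noteq> 0"
  shows "L_op q \<alpha> \<beta> n (f ^ n) = (-1) ^ (n * (n - 1) div 2)"
proof -
  define N where "N = (\<lambda>h. - (\<alpha> * sigma_q q h))"
  define v where "v = (\<lambda>j. (N ^^ j) f)"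
  have Nd: "N (a - b) = N a - N b" for a b
    by (simp add: N_def sigma_diff algebra_simps)
  have Nsub: "(N ^^ k) (a - b) = (N ^^ k) a - (N ^^ k) b" for k a b
    by (induction k) (simp_all add: Nd)
  have vS: "v (Suc j) = - (\<alpha> * sigma_q q (v j))" for j
    by (simp add: v_def N_def)
  have betaf: "\<beta> = f - N f" using assms(5) by (simp add: N_def add.commute)
  have bseq: "beta_seq q \<alpha> \<beta> j = v 0 - v j" for j
  proof -
    have "beta_seq q \<alpha> \<beta> j = (\<Sum>k<j. (N ^^ k) \<beta>)"
      by (simp add: beta_seq_def N_def)
    also have "\<dots> = (\<Sum>k<j. v k - v (Suc k))"
      by (rule sum.cong) (simp_all add: betaf Nsub v_def funpow_swap1)
    also have "\<dots> = v 0 - v j" by (rule sum_lessThan_telescope')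
    finally show ?thesis .
  qed
  have hsig: "\<alpha> ^ m * sigma_q q (hcs v m j) = (-1) ^ m * hcs (\<lambda>k. v (Suc k)) m j" for m j
    using hcs_sigma[OF assms(1)] vS by blast
  define F where "F = L_factor q \<alpha> \<beta> n"
  define e where "e d = (\<Sum>k<d. n - k + 1::nat)" for d
  have v0: "v 0 = f" by (simp add: v_def)
  have main: "d \<le> n \<Longrightarrow> foldr F [n-d+1..<n+1] (f^n) = (-1) ^ e d * hcs v (n-d) d" for d
  proof (induction d)
    case 0
    obtain m where m: "n = Suc m" using assms(2) by (cases n) auto
    show ?case by (simp add: e_def m v0)
  next
    case (Suc d)
    define m where "m = n - Suc d"
    have nd: "n - d = Suc m" using Suc.prems by (simp add: m_def)
    have ups: "[n - Suc d + 1..<n+1] = (n-d) # [n-d+1..<n+1]"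
    proof -
      have a: "n - Suc d + 1 = n - d" using Suc.prems by simp
      show ?thesis unfolding a using upt_conv_Cons[of "n-d" "n+1"] Suc.prems by simp
    qed
    define H where "H = hcs v (Suc m) d"
    have IH: "foldr F [n-d+1..<n+1] (f^n) = (-1) ^ e d * H"
      using Suc by (simp add: H_def nd)
    have bne: "v 0 - v (Suc d) \<noteq> 0" using assms(6) Suc.prems bseq[of "Suc d"] by auto
    have n1: "n + 1 - Suc m = Suc d" using Suc.prems nd by simp
    have num: "\<alpha> ^ Suc m * sigma_q q ((-1) ^ e d * H) - (-1) ^ Suc m * ((-1) ^ e d * H)
        = ((-1) ^ e d * (-1) ^ Suc (Suc m) * hcs v m (Suc d)) * (v 0 - v (Suc d))"
    proof -
      have "\<alpha> ^ Suc m * sigma_q q ((-1) ^ e d * H) = (-1) ^ e d * (\<alpha> ^ Suc m * sigma_q q H)"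
        by (simp only: sigma_sign[OF assms(1)] mult.left_commute)
      also have "\<dots> = (-1) ^ e d * ((-1) ^ Suc m * hcs (\<lambda>k. v (Suc k)) (Suc m) d)"
        by (simp only: H_def hsig)
      finally have a: "\<alpha> ^ Suc m * sigma_q q ((-1) ^ e d * H) = (-1) ^ e d * ((-1) ^ Suc m * hcs (\<lambda>k. v (Suc k)) (Suc m) d)" .
      have b: "hcs (\<lambda>k. v (Suc k)) (Suc m) d = H + (v (Suc d) - v 0) * hcs v m (Suc d)"
        using hcs_diff[of v m d] by (simp add: H_def algebra_simps)
      show ?thesis unfolding a b by (simp add: algebra_simps)
    qed
    have "foldr F [n - Suc d + 1..<n+1] (f^n) = F (Suc m) ((-1) ^ e d * H)"
      unfolding ups foldr_Cons o_apply IH by (simp only: nd)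
    also have "\<dots> = (-1) ^ e d * (-1) ^ Suc (Suc m) * hcs v m (Suc d)"
      unfolding F_def L_factor_def n1 bseq num using bne by simp
    also have "\<dots> = (-1) ^ e (Suc d) * hcs v (n - Suc d) (Suc d)"
    proof -
      have es: "e (Suc d) = e d + Suc (Suc m)" using nd by (simp add: e_def)
      show ?thesis by (simp only: es power_add m_def)
    qed
    finally show ?case .
  qed
  have "L_op q \<alpha> \<beta> n (f ^ n) = foldr F [n-n+1..<n+1] (f^n)"
    by (simp add: L_op_def F_def)
  also have "\<dots> = (-1) ^ e n" using main[of n] by simp
  also have "\<dots> = (-1) ^ (n * (n - 1) div 2)"
    unfolding e_def sum_parity by (simp add: power_add power_mult)
  finally show ?thesis .
qed

end
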